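(* Let $\Delta\subset\mathbb{R}^n_{\ge0}$ be a Newton polyhedron with a loose edge $E$ whose endpoints are $a,b\in\mathbb{R}^n_{\ge0}$. Then for every $c\in\Delta$ and every $\xi\in\mathbb{R}^n_{\ge0}$ with $\langle\xi,a\rangle=\langle\xi,b\rangle$ one has $\langle\xi,c\rangle\ge\langle\xi,a\rangle$.
   Context: A Newton polyhedron is a set of the form $\mathrm{conv}(S)+\mathbb{R}^n_{\ge0}$ (convex hull of $S+\mathbb{R}^n_{\ge0}$) for a nonempty finite set $S\subset\mathbb{Z}^n_{\ge0}$. For $\xi\in\mathbb{R}^n_{\ge0}$, the face $\Delta^\xi=\{a\in\Delta:\langle\xi,a\rangle=\min_{b\in\Delta}\langle\xi,b\rangle\}$; it is compact iff $\xi\in\mathbb{R}^n_{>0}$. An edge is a face of dimension 1; a loose edge is a compact edge not contained in any compact face of dimension $\ge2$. *)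

theory Defs
  imports "HOL-Analysis.Analysis"
begin

definition nonneg_orthant :: "(real^'n) set" where
  "nonneg_orthant = {x. \<forall>i. 0 \<le> x $ i}"

definition newton_polyhedron :: "(real^'n) set \<Rightarrow> bool" where
  "newton_polyhedron \<Delta> \<longleftrightarrow>
     (\<exists>S. finite S \<and> S \<noteq> {} \<and> S \<subseteq> {x. \<forall>i. x $ i \<in> \<int> \<and> 0 \<le> x $ i} \<and>
          \<Delta> = {p + q | p q. p \<in> convex hull S \<and> q \<in> nonneg_orthant})"

definition face_xi :: "(real^'n) set \<Rightarrow> real^'n \<Rightarrow> (real^'n) set" where
  "face_xi \<Delta> \<xi> = {a \<in> \<Delta>. \<forall>b \<in> \<Delta>. \<xi> \<bullet> a \<le> \<xi> \<bullet> b}"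

definition newton_face :: "(real^'n) set \<Rightarrow> (real^'n) set \<Rightarrow> bool" where
  "newton_face \<Delta> F \<longleftrightarrow> (\<exists>\<xi> \<in> nonneg_orthant. F = face_xi \<Delta> \<xi>)"

definition loose_edge :: "(real^'n) set \<Rightarrow> (real^'n) set \<Rightarrow> bool" where
  "loose_edge \<Delta> E \<longleftrightarrow>
     newton_face \<Delta> E \<and> compact E \<and> aff_dim E = 1 \<and>
     \<not> (\<exists>F. newton_face \<Delta> F \<and> compact F \<and> aff_dim F \<ge> 2 \<and> E \<subseteq> F)"

end

theory Submission imports Defs begin

lemma orth_inner_nonneg:
  assumes "\<eta> \<in> nonneg_orthant" "q \<in> nonneg_orthant"
  shows "0 \<le> \<eta> \<bullet> (q::real^'n)"
  using assms unfolding nonneg_orthant_def inner_vec_def by (auto intro!: sum_nonneg)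

lemma hull_bound:
  fixes \<Delta> S :: "(real^'n) set"
  assumes D: "\<Delta> = {p + q | p q. p \<in> convex hull S \<and> q \<in> nonneg_orthant}"
    and eta: "\<eta> \<in> nonneg_orthant" and Sm: "\<forall>s\<in>S. m \<le> \<eta> \<bullet> s" and c: "c \<in> \<Delta>"
  shows "m \<le> \<eta> \<bullet> c"
proof -
  obtain p q where c: "c = p + q" and p: "p \<in> convex hull S" and q: "q \<in> nonneg_orthant"
    using c D by auto
  have "convex hull S \<subseteq> {x. m \<le> \<eta> \<bullet> x}"
    by (rule hull_minimal) (use Sm convex_halfspace_ge[of m \<eta>] in auto)
  with p have "m \<le> \<eta> \<bullet> p" by auto
  moreover have "0 \<le> \<eta> \<bullet> q" using orth_inner_nonneg[OF eta q] .
  ultimately show ?thesis by (simp add: c inner_add_right)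
qed

lemma orth_closed: "closed (nonneg_orthant :: (real^'n) set)"
proof -
  have e: "nonneg_orthant = (\<Inter>i. {x::real^'n. 0 \<le> x $ i})"
    unfolding nonneg_orthant_def by auto
  have c: "closed {x::real^'n. 0 \<le> x $ i}" for i
    by (intro closed_Collect_le continuous_intros)
  show ?thesis unfolding e by (rule closed_INT) (use c in auto)
qed

lemma face_compact:
  fixes \<Delta> S :: "(real^'n) set"
  assumes D: "\<Delta> = {p + q | p q. p \<in> convex hull S \<and> q \<in> nonneg_orthant}"
    and fin: "finite S"
    and pos: "\<forall>i. 0 < \<eta> $ i" and a: "a \<in> \<Delta>" and amin: "\<forall>c\<in>\<Delta>. \<eta> \<bullet> a \<le> \<eta> \<bullet> c"
  shows "compact (face_xi \<Delta> \<eta>)"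
proof -
  have eq: "face_xi \<Delta> \<eta> = \<Delta> \<inter> {x. \<eta> \<bullet> x \<le> \<eta> \<bullet> a}"
    unfolding face_xi_def using a amin by (auto intro: order_trans)
  have cS: "compact (convex hull S)" using fin by (simp add: finite_imp_compact_convex_hull)
  have "\<Delta> = (\<Union>x\<in>nonneg_orthant. \<Union>y\<in>convex hull S. {x + y})"
    unfolding D by (auto simp: add.commute) (metis add.commute)
  then have "closed \<Delta>" using closed_compact_sums[OF orth_closed cS] by simp
  then have cl: "closed (face_xi \<Delta> \<eta>)" unfolding eq by (intro closed_Int closed_halfspace_le)
  obtain K where K: "\<forall>p\<in>convex hull S. norm p \<le> K"
    using compact_imp_bounded[OF cS] bounded_iff by blast
  define M where "M = \<eta> \<bullet> a + norm \<eta> * K"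
  have "norm x \<le> K + (\<Sum>i\<in>UNIV. M / \<eta> $ i)" if x: "x \<in> face_xi \<Delta> \<eta>" for x
  proof -
    obtain p q where xpq: "x = p + q" and p: "p \<in> convex hull S" and q: "q \<in> nonneg_orthant"
      using x D unfolding face_xi_def by auto
    have "\<eta> \<bullet> x \<le> \<eta> \<bullet> a" using x eq by auto
    moreover have "- (\<eta> \<bullet> p) \<le> norm \<eta> * K"
    proof -
      have "\<bar>\<eta> \<bullet> p\<bar> \<le> norm \<eta> * norm p" by (rule Cauchy_Schwarz_ineq2)
      also have "\<dots> \<le> norm \<eta> * K" using K p by (simp add: mult_left_mono)
      finally show ?thesis by linarith
    qed
    ultimately have eq_le: "\<eta> \<bullet> q \<le> M" unfolding M_def xpq by (simp add: inner_add_right)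
    have qi: "\<bar>q $ i\<bar> \<le> M / \<eta> $ i" for i
    proof -
      have q0: "\<forall>j. 0 \<le> q $ j" using q unfolding nonneg_orthant_def by auto
      have "\<eta> $ i * q $ i \<le> (\<Sum>j\<in>UNIV. \<eta> $ j * q $ j)"
        by (rule member_le_sum) (use q0 pos in \<open>auto simp: less_imp_le\<close>)
      also have "\<dots> = \<eta> \<bullet> q" by (simp add: inner_vec_def)
      finally have "\<eta> $ i * q $ i \<le> M" using eq_le by linarith
      then have "q $ i \<le> M / \<eta> $ i" using pos by (simp add: pos_le_divide_eq mult.commute)
      then show ?thesis using q0 by simp
    qed
    have "norm x \<le> norm p + norm q" unfolding xpq by (rule norm_triangle_ineq)
    moreover have "norm q \<le> (\<Sum>i\<in>UNIV. \<bar>q $ i\<bar>)" by (rule norm_le_l1_cart)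
    moreover have "(\<Sum>i\<in>UNIV. \<bar>q $ i\<bar>) \<le> (\<Sum>i\<in>UNIV. M / \<eta> $ i)" by (rule sum_mono) (use qi in auto)
    moreover have "norm p \<le> K" using K p by auto
    ultimately show ?thesis by linarith
  qed
  then have "bounded (face_xi \<Delta> \<eta>)" unfolding bounded_iff by blast
  with cl show ?thesis by (simp add: compact_eq_bounded_closed)
qed

theorem lemma2p1:
  fixes \<Delta> E :: "(real^'n) set" and a b c \<xi> :: "real^'n"
  assumes "newton_polyhedron \<Delta>"
    and "loose_edge \<Delta> E"
    and "E = closed_segment a b"
    and "a \<noteq> b"
    and "c \<in> \<Delta>"
    and "\<xi> \<in> nonneg_orthant"
    and "\<xi> \<bullet> a = \<xi> \<bullet> b"
  shows "\<xi> \<bullet> c \<ge> \<xi> \<bullet> a"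
proof (rule ccontr)
  assume neg: "\<not> \<xi> \<bullet> c \<ge> \<xi> \<bullet> a"
  obtain S where fin: "finite S" and D: "\<Delta> = {p + q | p q. p \<in> convex hull S \<and> q \<in> nonneg_orthant}"
    using assms(1) unfolding newton_polyhedron_def by blast
  have SD: "S \<subseteq> \<Delta>"
  proof
    fix s assume "s \<in> S"
    then have "s \<in> convex hull S" by (simp add: hull_inc)
    moreover have "(0::real^'n) \<in> nonneg_orthant" by (simp add: nonneg_orthant_def)
    ultimately show "s \<in> \<Delta>" unfolding D by force
  qed
  obtain \<xi>0 where x0: "\<xi>0 \<in> nonneg_orthant" and EF: "E = face_xi \<Delta> \<xi>0"
    using assms(2) unfolding loose_edge_def newton_face_def by blast
  have cE: "compact E" using assms(2) unfolding loose_edge_def by blast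
  have aE: "a \<in> E" and bE: "b \<in> E" using assms(3) by auto
  have aD: "a \<in> \<Delta>" and amin0: "\<forall>y\<in>\<Delta>. \<xi>0 \<bullet> a \<le> \<xi>0 \<bullet> y"
    using aE EF unfolding face_xi_def by auto
  have bD: "b \<in> \<Delta>" and bmin0: "\<forall>y\<in>\<Delta>. \<xi>0 \<bullet> b \<le> \<xi>0 \<bullet> y"
    using bE EF unfolding face_xi_def by auto
  have ab0: "\<xi>0 \<bullet> a = \<xi>0 \<bullet> b" using amin0 bmin0 aD bD by (meson order_antisym)
  have pos0: "0 < \<xi>0 $ i" for i
  proof (rule ccontr)
    assume "\<not> 0 < \<xi>0 $ i"
    then have z: "\<xi>0 $ i = 0" using x0 unfolding nonneg_orthant_def by (metis mem_Collect_eq order_le_less)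
    obtain B where B: "\<forall>x\<in>E. norm x \<le> B" using compact_imp_bounded[OF cE] bounded_iff by blast
    obtain p q where apq: "a = p + q" and p: "p \<in> convex hull S" and q: "q \<in> nonneg_orthant"
      using aD D by auto
    define t where "t = B + norm a + 1"
    have t0: "0 \<le> t" using B aE t_def by (smt (verit) norm_ge_zero)
    define x where "x = a + t *\<^sub>R axis i 1"
    have "q + t *\<^sub>R axis i 1 \<in> nonneg_orthant"
      using q t0 unfolding nonneg_orthant_def by (auto simp: axis_def)
    then have xD: "x \<in> \<Delta>" unfolding D x_def apq using p
      by (metis (mono_tags, lifting) add.assoc mem_Collect_eq)
    have "\<xi>0 \<bullet> x = \<xi>0 \<bullet> a" unfolding x_def using z by (simp add: inner_add_right inner_axis)
    then have "x \<in> E" unfolding EF face_xi_def using xD amin0 by auto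
    then have "norm x \<le> B" using B by auto
    moreover have "t \<le> norm x + norm a"
    proof -
      have "norm (t *\<^sub>R axis i (1::real)) = t" using t0 by simp
      then show ?thesis unfolding x_def by (metis add_diff_cancel_left' norm_triangle_ineq4 add.commute)
    qed
    ultimately show False unfolding t_def by linarith
  qed
  have "\<exists>s\<in>S. \<xi> \<bullet> s < \<xi> \<bullet> a"
  proof (rule ccontr)
    assume "\<not> ?thesis"
    then have "\<forall>s\<in>S. \<xi> \<bullet> a \<le> \<xi> \<bullet> s" by auto
    from hull_bound[OF D assms(6) this assms(5)] neg show False by simp
  qed
  define Bs where "Bs = {s\<in>S. \<xi> \<bullet> s < \<xi> \<bullet> a}"
  define r where "r s = (\<xi>0 \<bullet> s - \<xi>0 \<bullet> a) / (\<xi> \<bullet> a - \<xi> \<bullet> s)" for s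
  have Bsne: "Bs \<noteq> {}" and Bsfin: "finite Bs" using \<open>\<exists>s\<in>S. _\<close> fin unfolding Bs_def by auto
  define T where "T = Min (r ` Bs)"
  obtain s0 where s0B: "s0 \<in> Bs" and Ts0: "T = r s0"
  proof -
    have "Min (r ` Bs) \<in> r ` Bs" using Bsne Bsfin by (intro Min_in) auto
    then show ?thesis using that unfolding T_def by blast
  qed
  have Tle: "T \<le> r s" if "s \<in> Bs" for s unfolding T_def using that Bsfin by simp
  have s0S: "s0 \<in> S" and s0lt: "\<xi> \<bullet> s0 < \<xi> \<bullet> a" using s0B Bs_def by auto
  have al0: "0 \<le> \<xi>0 \<bullet> s - \<xi>0 \<bullet> a" if "s \<in> S" for s using amin0 SD that by auto
  have T0: "0 \<le> T" unfolding Ts0 r_def using al0[OF s0S] s0lt by simp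
  define \<eta> where "\<eta> = \<xi>0 + T *\<^sub>R \<xi>"
  have etapos: "\<forall>i. 0 < \<eta> $ i"
    using pos0 assms(6) T0 unfolding \<eta>_def nonneg_orthant_def
    by (simp add: add_pos_nonneg)
  then have etaO: "\<eta> \<in> nonneg_orthant" unfolding nonneg_orthant_def by (simp add: less_imp_le)
  have etaS: "\<forall>s\<in>S. \<eta> \<bullet> a \<le> \<eta> \<bullet> s"
  proof
    fix s assume sS: "s \<in> S"
    show "\<eta> \<bullet> a \<le> \<eta> \<bullet> s"
    proof (cases "\<xi> \<bullet> s < \<xi> \<bullet> a")
      case True
      then have "T \<le> r s" using Tle sS Bs_def by auto
      then have "T * (\<xi> \<bullet> a - \<xi> \<bullet> s) \<le> \<xi>0 \<bullet> s - \<xi>0 \<bullet> a"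
        unfolding r_def using True by (simp add: le_divide_eq)
      then show ?thesis unfolding \<eta>_def by (simp add: inner_add_left algebra_simps)
    next
      case False
      then have "T * (\<xi> \<bullet> a) \<le> T * (\<xi> \<bullet> s)" using T0 by (simp add: mult_left_mono)
      then show ?thesis using al0[OF sS] unfolding \<eta>_def by (simp add: inner_add_left algebra_simps)
    qed
  qed
  have etamin: "\<forall>y\<in>\<Delta>. \<eta> \<bullet> a \<le> \<eta> \<bullet> y" using hull_bound[OF D etaO etaS] by blast
  have eta_s0: "\<eta> \<bullet> s0 = \<eta> \<bullet> a"
  proof -
    have "T * (\<xi> \<bullet> a - \<xi> \<bullet> s0) = \<xi>0 \<bullet> s0 - \<xi>0 \<bullet> a"
      unfolding Ts0 r_def using s0lt by simp
    then show ?thesis unfolding \<eta>_def by (simp add: inner_add_left algebra_simps)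
  qed
  define F where "F = face_xi \<Delta> \<eta>"
  have FF: "newton_face \<Delta> F" unfolding newton_face_def F_def using etaO by blast
  have cF: "compact F" unfolding F_def by (rule face_compact[OF D fin etapos aD etamin])
  have EsubF: "E \<subseteq> F"
  proof
    fix x assume xE: "x \<in> E"
    then have xD: "x \<in> \<Delta>" using EF face_xi_def by auto
    obtain u where x: "x = (1 - u) *\<^sub>R a + u *\<^sub>R b" using xE assms(3) unfolding closed_segment_def by auto
    have "\<eta> \<bullet> b = \<eta> \<bullet> a" unfolding \<eta>_def using ab0 assms(7) by (simp add: inner_add_left)
    then have "\<eta> \<bullet> x = \<eta> \<bullet> a" unfolding x by (simp add: inner_add_right algebra_simps)
    then show "x \<in> F" unfolding F_def face_xi_def using xD etamin by auto
  qed
  have s0F: "s0 \<in> F" unfolding F_def face_xi_def using SD s0S eta_s0 etamin by auto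
  have s0aff: "s0 \<notin> affine hull {a, b}"
  proof
    assume "s0 \<in> affine hull {a, b}"
    then obtain u v where uv: "s0 = u *\<^sub>R a + v *\<^sub>R b" "u + v = 1" unfolding affine_hull_2 by auto
    have "\<xi> \<bullet> s0 = u * (\<xi> \<bullet> a) + v * (\<xi> \<bullet> b)" unfolding uv(1) by (simp add: inner_add_right)
    also have "\<dots> = (u + v) * (\<xi> \<bullet> a)" using assms(7) by (simp add: distrib_right)
    finally have "\<xi> \<bullet> s0 = \<xi> \<bullet> a" using uv(2) by simp
    with s0lt show False by simp
  qed
  have "aff_dim (insert s0 {a, b}) = 2" using s0aff assms(4) by (simp add: aff_dim_insert)
  moreover have "insert s0 {a, b} \<subseteq> F" using s0F EsubF aE bE by auto
  ultimately have "aff_dim F \<ge> 2" by (metis aff_dim_subset)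
  then show False using assms(2) FF cF EsubF unfolding loose_edge_def by blast
qed

end
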